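(* For every preference profile $p\in\mathcal P$, $M(p)=D_{\mu(p)}(p)$.
   Context: Let $n,h\ge2$, $N=\{1,\dots,n\}$ the alternatives, $H=\{1,\dots,h\}$ the individuals. A preference profile is an $h$-tuple $p=(p_1,\dots,p_h)$ of linear orders on $N$; $\mathcal P$ is the set of profiles; $x>_{p_i}y$ means $x\ne y$ and $x$ is ranked above $y$ by $p_i$. The Minimax SCC is $M(p)=\mathrm{argmin}_{x\in N}\max_{y\in N\setminus\{x\}}|\{i\in H: y>_{p_i}x\}|$. A majority threshold is an integer $\mu$ with $h/2<\mu\le h$. For such $\mu$, $D_\mu(p)=\{x\in N:\ \forall y\in N,\ |\{i\in H: y>_{p_i}x\}|<\mu\}$. Define $\mu(p)=\min\{\mu\in\mathbb N\cap(h/2,h]: D_\mu(p)\neq\varnothing\}$ (this set of thresholds is nonempty). *)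

theory Defs
  imports Main
begin

(* Alternatives N = {1..n}, individuals H = {1..h}.
   A linear order is a relation r with (x,y) \<in> r meaning "x is ranked at most as high as y",
   i.e. y is weakly above x. *)

definition profile :: "nat \<Rightarrow> nat \<Rightarrow> (nat \<Rightarrow> (nat \<times> nat) set) \<Rightarrow> bool" where
  "profile n h p \<longleftrightarrow> (\<forall>i\<in>{1..h}. linear_order_on {1..n} (p i))"

definition prefers :: "(nat \<times> nat) set \<Rightarrow> nat \<Rightarrow> nat \<Rightarrow> bool" where
  "prefers r y x \<longleftrightarrow> y \<noteq> x \<and> (x, y) \<in> r"

definition support :: "nat \<Rightarrow> (nat \<Rightarrow> (nat \<times> nat) set) \<Rightarrow> nat \<Rightarrow> nat \<Rightarrow> nat" where
  "support h p y x = card {i \<in> {1..h}. prefers (p i) y x}"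

definition max_defeat :: "nat \<Rightarrow> nat \<Rightarrow> (nat \<Rightarrow> (nat \<times> nat) set) \<Rightarrow> nat \<Rightarrow> nat" where
  "max_defeat n h p x = Max ((\<lambda>y. support h p y x) ` ({1..n} - {x}))"

definition minimax :: "nat \<Rightarrow> nat \<Rightarrow> (nat \<Rightarrow> (nat \<times> nat) set) \<Rightarrow> nat set" where
  "minimax n h p = {x \<in> {1..n}. \<forall>z\<in>{1..n}. max_defeat n h p x \<le> max_defeat n h p z}"

definition is_threshold :: "nat \<Rightarrow> nat \<Rightarrow> bool" where
  "is_threshold h \<mu> \<longleftrightarrow> h < 2 * \<mu> \<and> \<mu> \<le> h"

definition D :: "nat \<Rightarrow> nat \<Rightarrow> (nat \<Rightarrow> (nat \<times> nat) set) \<Rightarrow> nat \<Rightarrow> nat set" where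
  "D n h p \<mu> = {x \<in> {1..n}. \<forall>y\<in>{1..n}. support h p y x < \<mu>}"

definition mu_p :: "nat \<Rightarrow> nat \<Rightarrow> (nat \<Rightarrow> (nat \<times> nat) set) \<Rightarrow> nat" where
  "mu_p n h p = (LEAST \<mu>. is_threshold h \<mu> \<and> D n h p \<mu> \<noteq> {})"

end

theory Submission
  imports Defs
begin

lemma lin_facts:
  assumes "profile n h p" "i \<in> {1..h}"
  shows "refl_on {1..n} (p i)" "trans (p i)" "antisym (p i)" "total_on {1..n} (p i)"
  using assms unfolding profile_def linear_order_on_def partial_order_on_def preorder_on_def
  by auto

lemma support_sum:
  assumes "profile n h p" "x \<in> {1..n}" "y \<in> {1..n}" "x \<noteq> y"
  shows "support h p y x + support h p x y = h"
proof -
  have U: "{i \<in> {1..h}. prefers (p i) y x} \<union> {i \<in> {1..h}. prefers (p i) x y} = {1..h}"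
  proof -
    { fix i assume i: "i \<in> {1..h}"
      have "(x,y) \<in> p i \<or> (y,x) \<in> p i"
        using lin_facts(4)[OF assms(1) i] assms(2-4) unfolding total_on_def by blast
      hence "prefers (p i) y x \<or> prefers (p i) x y" using assms(4) unfolding prefers_def by auto }
    thus ?thesis by blast
  qed
  have Dj: "{i \<in> {1..h}. prefers (p i) y x} \<inter> {i \<in> {1..h}. prefers (p i) x y} = {}"
  proof -
    { fix i assume i: "i \<in> {1..h}" "prefers (p i) y x" "prefers (p i) x y"
      hence False using lin_facts(3)[OF assms(1) i(1)] unfolding prefers_def antisym_def by auto }
    thus ?thesis by auto
  qed
  have "card {1..h} = support h p y x + support h p x y"
    unfolding support_def using U Dj card_Un_disjoint[of "{i \<in> {1..h}. prefers (p i) y x}" "{i \<in> {1..h}. prefers (p i) x y}"]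
    by (metis (no_types, lifting) finite_Un finite_atLeastAtMost)
  thus ?thesis by simp
qed

lemma md_ge:
  assumes "y \<in> {1..n}" "y \<noteq> x"
  shows "support h p y x \<le> max_defeat n h p x"
  unfolding max_defeat_def using assms by (intro Max_ge) auto

lemma md_less:
  assumes "n \<ge> 2" "x \<in> {1..n}"
  shows "max_defeat n h p x < \<mu> \<longleftrightarrow> (\<forall>y\<in>{1..n}. support h p y x < \<mu>)"
proof -
  have ne: "{1..n} - {x} \<noteq> {}"
  proof
    assume "{1..n} - {x} = {}"
    moreover have "1 \<in> {1..n}" "2 \<in> {1..n}" using assms by auto
    ultimately have "(1::nat) = 2" by blast
    thus False by simp
  qed
  have sxx: "support h p x x = 0" unfolding support_def prefers_def by simp
  have "max_defeat n h p x < \<mu> \<longleftrightarrow> (\<forall>y\<in>{1..n} - {x}. support h p y x < \<mu>)"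
    unfolding max_defeat_def
    using ne Max_less_iff[of "(\<lambda>y. support h p y x) ` ({1..n} - {x})" \<mu>] by simp
  moreover have "(\<forall>y\<in>{1..n} - {x}. support h p y x < \<mu>) \<longrightarrow> 0 < \<mu>"
    using ne by auto
  ultimately show ?thesis using sxx by auto
qed

lemma top_exists:
  assumes "profile n h p" "h \<ge> 1" "n \<ge> 1"
  shows "\<exists>t\<in>{1..n}. \<forall>y\<in>{1..n}. \<not> prefers (p 1) y t"
proof -
  have i1: "(1::nat) \<in> {1..h}" using assms by auto
  note L = lin_facts[OF assms(1) i1]
  define f where "f t = card {y\<in>{1..n}. (y,t) \<in> p 1}" for t
  obtain t where t: "t \<in> {1..n}" "f t = Max (f ` {1..n})"
  proof -
    have "Max (f ` {1..n}) \<in> f ` {1..n}" using assms by (intro Max_in) auto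
    then obtain t where "t \<in> {1..n}" "Max (f ` {1..n}) = f t" by (rule imageE)
    thus ?thesis using that by simp
  qed
  have "\<forall>y\<in>{1..n}. \<not> prefers (p 1) y t"
  proof (intro ballI notI)
    fix y assume y: "y \<in> {1..n}" and pr: "prefers (p 1) y t"
    hence ty: "(t,y) \<in> p 1" "y \<noteq> t" unfolding prefers_def by auto
    have "{z\<in>{1..n}. (z,t) \<in> p 1} \<subset> {z\<in>{1..n}. (z,y) \<in> p 1}"
    proof
      show "{z\<in>{1..n}. (z,t) \<in> p 1} \<subseteq> {z\<in>{1..n}. (z,y) \<in> p 1}"
        using L(2) ty unfolding trans_def by blast
      have "(y,y) \<in> p 1" using L(1) y unfolding refl_on_def by auto
      moreover have "(y,t) \<notin> p 1" using L(3) ty unfolding antisym_def by auto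
      ultimately show "{z\<in>{1..n}. (z,t) \<in> p 1} \<noteq> {z\<in>{1..n}. (z,y) \<in> p 1}" using y by blast
    qed
    hence "f t < f y" unfolding f_def by (intro psubset_card_mono) auto
    moreover have "f y \<le> f t" using t y by simp
    ultimately show False by simp
  qed
  thus ?thesis using t by blast
qed

theorem proposition1:
  fixes n h :: nat and p :: "nat \<Rightarrow> (nat \<times> nat) set"
  assumes "n \<ge> 2" and "h \<ge> 2" and "profile n h p"
  shows "minimax n h p = D n h p (mu_p n h p)"
proof -
  let ?N = "{1..n::nat}"
  define md where "md = max_defeat n h p"
  define m where "m = Min (md ` ?N)"
  obtain x0 where x0: "x0 \<in> ?N" "md x0 = m"
    using Min_in[of "md ` ?N"] assms(1) unfolding m_def by fastforce
  have mle: "\<And>x. x \<in> ?N \<Longrightarrow> m \<le> md x" unfolding m_def by simp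
  have MM: "minimax n h p = {x\<in>?N. md x \<le> m}"
    unfolding minimax_def md_def[symmetric] using mle x0 by (auto intro: order_trans)
  have DD: "\<And>\<mu>. D n h p \<mu> = {x\<in>?N. md x < \<mu>}"
    unfolding D_def md_def using md_less[OF assms(1)] by auto
  obtain t where t: "t \<in> ?N" "\<forall>y\<in>?N. \<not> prefers (p 1) y t"
    using top_exists[OF assms(3)] assms by auto
  have "\<forall>y\<in>?N. support h p y t < h"
  proof
    fix y assume "y \<in> ?N"
    hence n1: "\<not> prefers (p 1) y t" using t by blast
    have "{i \<in> {1..h}. prefers (p i) y t} \<subseteq> {2..h}"
    proof
      fix i assume "i \<in> {i \<in> {1..h}. prefers (p i) y t}"
      hence "i \<ge> 1" "i \<le> h" "i \<noteq> 1" using n1 by auto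
      thus "i \<in> {2..h}" by simp
    qed
    hence "support h p y t \<le> card {2..h}" unfolding support_def by (intro card_mono) auto
    thus "support h p y t < h" using assms(2) by simp
  qed
  hence mdt: "md t < h" using md_less[OF assms(1) t(1)] unfolding md_def by simp
  have mh: "m < h" using mle[OF t(1)] mdt by simp
  define k where "k = h div 2 + 1"
  define mu where "mu = max (m+1) k"
  have mup: "mu_p n h p = mu"
    unfolding mu_p_def
  proof (rule Least_equality)
    show "is_threshold h mu \<and> D n h p mu \<noteq> {}"
      unfolding is_threshold_def DD mu_def k_def using mh assms(2) x0 by auto
  next
    fix \<mu> assume a: "is_threshold h \<mu> \<and> D n h p \<mu> \<noteq> {}"
    then obtain x where "x \<in> ?N" "md x < \<mu>" unfolding DD by auto
    hence "m + 1 \<le> \<mu>" using mle by fastforce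
    moreover have "k \<le> \<mu>" using a unfolding is_threshold_def k_def by linarith
    ultimately show "mu \<le> \<mu>" unfolding mu_def by simp
  qed
  have "{x\<in>?N. md x \<le> m} = {x\<in>?N. md x < mu}"
  proof (intro Collect_cong conj_cong refl iffI)
    fix x assume "md x \<le> m" thus "md x < mu" unfolding mu_def by simp
  next
    fix x assume x: "x \<in> ?N" and lt: "md x < mu"
    show "md x \<le> m"
    proof (cases "mu = m + 1")
      case True thus ?thesis using lt by simp
    next
      case False
      hence mk: "m + 1 < k" "mu = k" unfolding mu_def by auto
      show ?thesis
      proof (cases "x = x0")
        case True thus ?thesis using x0 by simp
      next
        case False
        have s1: "support h p x x0 \<le> m" using md_ge[OF x False, of h p] x0 unfolding md_def by linarith
        have s2: "support h p x0 x \<le> md x" using md_ge[OF x0(1), of x h p] False unfolding md_def by simp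
        have "support h p x x0 + support h p x0 x = h"
          using support_sum[OF assms(3) x0(1) x] False by simp
        thus ?thesis using s1 s2 lt mk unfolding k_def by linarith
      qed
    qed
  qed
  thus ?thesis using MM DD mup by simp
qed

end
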